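(* A ring $R$ with identity is semisimple if and only if the free right $R$-module $R_R^{(\mathbb{N})}$ has the SSP.
   Context: Rings are associative with identity and modules are unitary. $R_R^{(\mathbb{N})}$ denotes the direct sum of countably many copies of $R_R$. A module $M$ has the summand sum property (SSP) if the sum of any two direct summands of $M$ is again a direct summand of $M$. *)

theory Defs
  imports Main "HOL-Library.Function_Algebras"
begin

text \<open>Right modules are given by an abelian group
  type together with a carrier set M and a right scalar action act.\<close>

definition rsubmodule :: "'m::ab_group_add set \<Rightarrow> ('m \<Rightarrow> 'a::ring_1 \<Rightarrow> 'm) \<Rightarrow> 'm set \<Rightarrow> bool" where
  "rsubmodule M act S \<longleftrightarrow> S \<subseteq> M \<and> 0 \<in> S \<and>
     (\<forall>x\<in>S. \<forall>y\<in>S. x + y \<in> S) \<and> (\<forall>x\<in>S. - x \<in> S) \<and>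
     (\<forall>x\<in>S. \<forall>r. act x r \<in> S)"

definition sum_sets :: "'m::ab_group_add set \<Rightarrow> 'm set \<Rightarrow> 'm set" where
  "sum_sets S T = {x + y | x y. x \<in> S \<and> y \<in> T}"

definition direct_summand :: "'m::ab_group_add set \<Rightarrow> ('m \<Rightarrow> 'a::ring_1 \<Rightarrow> 'm) \<Rightarrow> 'm set \<Rightarrow> bool" where
  "direct_summand M act S \<longleftrightarrow> rsubmodule M act S \<and>
     (\<exists>T. rsubmodule M act T \<and> S \<inter> T = {0} \<and> sum_sets S T = M)"

definition SSP :: "'m::ab_group_add set \<Rightarrow> ('m \<Rightarrow> 'a::ring_1 \<Rightarrow> 'm) \<Rightarrow> bool" where
  "SSP M act \<longleftrightarrow> (\<forall>S T. direct_summand M act S \<and> direct_summand M act T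
                      \<longrightarrow> direct_summand M act (sum_sets S T))"

text \<open>A ring R is semisimple iff R_R is a semisimple module, i.e. every
  submodule of R_R (right ideal) is a direct summand of R_R.\<close>
definition semisimple_ring :: "'a::ring_1 itself \<Rightarrow> bool" where
  "semisimple_ring _ \<longleftrightarrow>
     (\<forall>I::'a set. rsubmodule UNIV (\<lambda>x r. x * r) I \<longrightarrow> direct_summand UNIV (\<lambda>x r. x * r) I)"

text \<open>The free right module R_R^(N): finitely supported sequences, with right action.\<close>
definition free_countable :: "(nat \<Rightarrow> 'a::ring_1) set" where
  "free_countable = {x. finite {n. x n \<noteq> 0}}"

definition rsmult :: "(nat \<Rightarrow> 'a::ring_1) \<Rightarrow> 'a \<Rightarrow> (nat \<Rightarrow> 'a)" where
  "rsmult x r = (\<lambda>n. x n * r)"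

end

theory Submission
  imports Defs
begin

lemma rsub_subset: "rsubmodule M act S \<Longrightarrow> S \<subseteq> M"
  by (simp add: rsubmodule_def)
lemma rsub_zero: "rsubmodule M act S \<Longrightarrow> 0 \<in> S"
  by (simp add: rsubmodule_def)
lemma rsub_add: "rsubmodule M act S \<Longrightarrow> x \<in> S \<Longrightarrow> y \<in> S \<Longrightarrow> x + y \<in> S"
  by (simp add: rsubmodule_def)
lemma rsub_neg: "rsubmodule M act S \<Longrightarrow> x \<in> S \<Longrightarrow> - x \<in> S"
  by (simp add: rsubmodule_def)
lemma rsub_act: "rsubmodule M act S \<Longrightarrow> x \<in> S \<Longrightarrow> act x r \<in> S"
  by (simp add: rsubmodule_def)
lemma rsubI: "S \<subseteq> M \<Longrightarrow> 0 \<in> S \<Longrightarrow> (\<forall>x\<in>S. \<forall>y\<in>S. x + y \<in> S) \<Longrightarrow> (\<forall>x\<in>S. - x \<in> S)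
  \<Longrightarrow> (\<forall>x\<in>S. \<forall>r. act x r \<in> S) \<Longrightarrow> rsubmodule M act S"
  by (simp add: rsubmodule_def)

lemma fc_iff: "x \<in> free_countable \<longleftrightarrow> (\<exists>n. \<forall>j>n. x j = 0)"
proof
  assume "x \<in> free_countable"
  then have "finite {n. x n \<noteq> 0}" by (simp add: free_countable_def)
  then obtain n where "\<forall>j\<in>{n. x n \<noteq> 0}. j \<le> n" using finite_nat_set_iff_bounded_le by blast
  then show "\<exists>n. \<forall>j>n. x j = 0" by (metis leD mem_Collect_eq)
next
  assume "\<exists>n. \<forall>j>n. x j = 0"
  then obtain n where "\<forall>j>n. x j = 0" by blast
  then have "{j. x j \<noteq> 0} \<subseteq> {..n}" by (auto simp: not_less[symmetric])
  then show "x \<in> free_countable" unfolding free_countable_def using finite_subset by blast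
qed

lemma fc_zero: "(0::nat\<Rightarrow>'a::ring_1) \<in> free_countable"
  by (simp add: fc_iff)

lemma fc_add: "x \<in> free_countable \<Longrightarrow> y \<in> free_countable \<Longrightarrow> (x + y :: nat \<Rightarrow> 'a::ring_1) \<in> free_countable"
proof -
  assume "x \<in> free_countable" "y \<in> free_countable"
  then obtain n m where "\<forall>j>n. x j = 0" "\<forall>j>m. y j = 0" by (auto simp: fc_iff)
  then have "\<forall>j>max n m. (x+y) j = 0" by simp
  then have "\<exists>n. \<forall>j>n. (x+y) j = 0" by blast
  then show ?thesis by (simp only: fc_iff)
qed

lemma fc_uminus: "x \<in> free_countable \<Longrightarrow> (- x :: nat \<Rightarrow> 'a::ring_1) \<in> free_countable"
  by (auto simp: fc_iff)

lemma fc_diff: "x \<in> free_countable \<Longrightarrow> y \<in> free_countable \<Longrightarrow> (x - y :: nat \<Rightarrow> 'a::ring_1) \<in> free_countable"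
  using fc_add[of x "-y"] fc_uminus[of y] by simp

lemma fc_rsmult: "x \<in> free_countable \<Longrightarrow> rsmult (x :: nat \<Rightarrow> 'a::ring_1) r \<in> free_countable"
  unfolding fc_iff rsmult_def by (metis mult_zero_left)

definition delta :: "nat \<Rightarrow> 'a::ring_1 \<Rightarrow> nat \<Rightarrow> 'a" where
  "delta n c = (\<lambda>j. if j = n then c else 0)"

lemma fc_delta: "delta n c \<in> free_countable"
  unfolding fc_iff delta_def by (rule exI[of _ n]) auto

lemma fc_rsubmodule: "rsubmodule (free_countable :: (nat \<Rightarrow> 'a::ring_1) set) rsmult free_countable"
  unfolding rsubmodule_def using fc_zero fc_add fc_uminus fc_rsmult by blast

lemma sum_submod:
  assumes S: "rsubmodule (free_countable :: (nat \<Rightarrow> 'a::ring_1) set) rsmult S"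
    and T: "rsubmodule (free_countable :: (nat \<Rightarrow> 'a::ring_1) set) rsmult T"
  shows "rsubmodule free_countable rsmult (sum_sets S T)"
proof -
  have SS: "S \<subseteq> free_countable" "0 \<in> S" "\<And>x y. x \<in> S \<Longrightarrow> y \<in> S \<Longrightarrow> x + y \<in> S"
    "\<And>x. x \<in> S \<Longrightarrow> - x \<in> S" "\<And>x r. x \<in> S \<Longrightarrow> rsmult x r \<in> S"
    using S unfolding rsubmodule_def by blast+
  have TS: "T \<subseteq> free_countable" "0 \<in> T" "\<And>x y. x \<in> T \<Longrightarrow> y \<in> T \<Longrightarrow> x + y \<in> T"
    "\<And>x. x \<in> T \<Longrightarrow> - x \<in> T" "\<And>x r. x \<in> T \<Longrightarrow> rsmult x r \<in> T"
    using T unfolding rsubmodule_def by blast+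
  have "sum_sets S T \<subseteq> free_countable" unfolding sum_sets_def using SS(1) TS(1) fc_add by blast
  moreover have "0 \<in> sum_sets S T" unfolding sum_sets_def using SS(2) TS(2)
    by (auto intro!: exI[of _ "0::nat\<Rightarrow>'a"])
  moreover have "\<forall>x\<in>sum_sets S T. \<forall>y\<in>sum_sets S T. x + y \<in> sum_sets S T"
  proof (intro ballI)
    fix x y assume "x \<in> sum_sets S T" "y \<in> sum_sets S T"
    then obtain s1 t1 s2 t2 where st: "s1 \<in> S" "t1 \<in> T" "x = s1 + t1" "s2 \<in> S" "t2 \<in> T" "y = s2 + t2"
      unfolding sum_sets_def by blast
    then have "x + y = (s1 + s2) + (t1 + t2)" by (simp add: algebra_simps)
    then show "x + y \<in> sum_sets S T" unfolding sum_sets_def using st SS(3) TS(3) by blast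
  qed
  moreover have "\<forall>x\<in>sum_sets S T. - x \<in> sum_sets S T"
  proof
    fix x assume "x \<in> sum_sets S T"
    then obtain s t where st: "s \<in> S" "t \<in> T" "x = s + t" unfolding sum_sets_def by blast
    then have "- x = (- s) + (- t)" by (simp add: algebra_simps)
    then show "- x \<in> sum_sets S T" unfolding sum_sets_def using st SS(4) TS(4) by blast
  qed
  moreover have "\<forall>x\<in>sum_sets S T. \<forall>r. rsmult x r \<in> sum_sets S T"
  proof (intro ballI allI)
    fix x r assume "x \<in> sum_sets S T"
    then obtain s t where st: "s \<in> S" "t \<in> T" "x = s + t" unfolding sum_sets_def by blast
    then have "rsmult x r = rsmult s r + rsmult t r" by (simp add: rsmult_def fun_eq_iff distrib_right)
    then show "rsmult x r \<in> sum_sets S T" unfolding sum_sets_def using st SS(5) TS(5) by blast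
  qed
  ultimately show ?thesis by (rule rsubI)
qed

section \<open>Semisimple implies every submodule of the free module is a summand\<close>

lemma submod_summand:
  assumes ss: "semisimple_ring TYPE('a::ring_1)"
    and N: "rsubmodule (free_countable::(nat\<Rightarrow>'a) set) rsmult N"
  shows "direct_summand free_countable rsmult N"
proof -
  define J where "J m = {y m | y. y \<in> N \<and> (\<forall>i>m. y i = 0)}" for m
  have NS: "N \<subseteq> free_countable" "0 \<in> N" "\<And>x y. x \<in> N \<Longrightarrow> y \<in> N \<Longrightarrow> x + y \<in> N"
    "\<And>x. x \<in> N \<Longrightarrow> - x \<in> N" "\<And>x r. x \<in> N \<Longrightarrow> rsmult x r \<in> N"
    using N unfolding rsubmodule_def by blast+
  have Jsub: "rsubmodule UNIV (\<lambda>x r. x * r) (J m)" for m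
  proof -
    have "(0::'a) \<in> J m" unfolding J_def using NS(2) by (auto intro!: exI[of _ "0::nat\<Rightarrow>'a"])
    moreover have "\<forall>x\<in>J m. \<forall>y\<in>J m. x + y \<in> J m"
    proof (intro ballI)
      fix x y assume "x \<in> J m" "y \<in> J m"
      then obtain u v where "u \<in> N" "\<forall>i>m. u i = 0" "x = u m" "v \<in> N" "\<forall>i>m. v i = 0" "y = v m"
        unfolding J_def by blast
      then show "x + y \<in> J m" unfolding J_def
        by (intro CollectI exI[of _ "u+v"]) (auto intro: NS(3))
    qed
    moreover have "\<forall>x\<in>J m. - x \<in> J m"
    proof
      fix x assume "x \<in> J m"
      then obtain u where "u \<in> N" "\<forall>i>m. u i = 0" "x = u m"
        unfolding J_def by blast
      then show "- x \<in> J m" unfolding J_def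
        by (intro CollectI exI[of _ "-u"]) (auto intro: NS(4))
    qed
    moreover have "\<forall>x\<in>J m. \<forall>r. x * r \<in> J m"
    proof (intro ballI allI)
      fix x r assume "x \<in> J m"
      then obtain u where "u \<in> N" "\<forall>i>m. u i = 0" "x = u m"
        unfolding J_def by blast
      then show "x * r \<in> J m" unfolding J_def
        by (intro CollectI exI[of _ "rsmult u r"]) (use NS(5)[of u r] in \<open>auto simp: rsmult_def\<close>)
    qed
    ultimately show ?thesis by (rule rsubI[OF subset_UNIV])
  qed
  have "\<forall>m. \<exists>K. rsubmodule UNIV (\<lambda>x r. x * r) K \<and> J m \<inter> K = {0} \<and> sum_sets (J m) K = UNIV"
  proof
    fix m
    have "direct_summand UNIV (\<lambda>x r. x * r) (J m)"
      using ss[unfolded semisimple_ring_def, rule_format, OF Jsub[of m]] .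
    then show "\<exists>K. rsubmodule UNIV (\<lambda>x r. x * r) K \<and> J m \<inter> K = {0} \<and> sum_sets (J m) K = UNIV"
      unfolding direct_summand_def by (rule conjunct2)
  qed
  then obtain K where K: "\<And>m. rsubmodule UNIV (\<lambda>x r. x * r) (K m)" "\<And>m. J m \<inter> K m = {0}"
    "\<And>m. sum_sets (J m) (K m) = UNIV"
    by metis
  have K0: "0 \<in> K m" and Kadd: "\<And>x y. x \<in> K m \<Longrightarrow> y \<in> K m \<Longrightarrow> x + y \<in> K m"
    and Kneg: "\<And>x. x \<in> K m \<Longrightarrow> - x \<in> K m" and Kmul: "\<And>x r. x \<in> K m \<Longrightarrow> x * r \<in> K m" for m
    using K(1)[of m] unfolding rsubmodule_def by blast+
  define C where "C = {x \<in> free_countable. \<forall>m. x m \<in> K m}"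
  have Csub: "rsubmodule free_countable rsmult C"
    unfolding rsubmodule_def C_def
    using fc_zero fc_add fc_uminus fc_rsmult K0 Kadd Kneg Kmul
    by (auto simp: rsmult_def)
  have int: "N \<inter> C = {0}"
  proof
    show "{0} \<subseteq> N \<inter> C" using rsub_zero[OF Csub] NS(2) by blast
    show "N \<inter> C \<subseteq> {0}"
    proof
      fix y assume y: "y \<in> N \<inter> C"
      show "y \<in> {0}"
      proof (rule ccontr)
        assume "y \<notin> {0}"
        then have ne: "{n. y n \<noteq> 0} \<noteq> {}" by auto
        have fin: "finite {n. y n \<noteq> 0}" using y NS(1) unfolding free_countable_def by blast
        define m where "m = Max {n. y n \<noteq> 0}"
        have ym: "y m \<noteq> 0" using Max_in[OF fin ne] m_def by simp
        have above: "\<forall>i>m. y i = 0" using Max_ge[OF fin] m_def by (metis leD mem_Collect_eq)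
        have "y m \<in> J m" unfolding J_def using y above by blast
        moreover have "y m \<in> K m" using y unfolding C_def by blast
        ultimately show False using K(2)[of m] ym by blast
      qed
    qed
  qed
  have cover: "\<forall>x\<in>free_countable. (\<forall>j\<ge>n. x j = 0) \<longrightarrow> x \<in> sum_sets N C" for n
  proof (induction n)
    case 0
    show ?case
    proof (intro ballI impI)
      fix x :: "nat \<Rightarrow> 'a" assume "\<forall>j\<ge>0. x j = 0"
      then have "x = 0 + 0" by auto
      moreover have "(0::nat\<Rightarrow>'a) \<in> C" using rsub_zero[OF Csub] .
      ultimately show "x \<in> sum_sets N C" unfolding sum_sets_def using NS(2) by blast
    qed
  next
    case (Suc n)
    show ?case
    proof (intro ballI impI)
      fix x :: "nat \<Rightarrow> 'a" assume x: "x \<in> free_countable" and xs: "\<forall>j\<ge>Suc n. x j = 0"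
      have "x n \<in> sum_sets (J n) (K n)" using K(3) by blast
      then obtain jj k where jk: "jj \<in> J n" "k \<in> K n" "x n = jj + k" unfolding sum_sets_def by blast
      then obtain y where y: "y \<in> N" "\<forall>i>n. y i = 0" "jj = y n" unfolding J_def by blast
      define x' where "x' = x - y - delta n k"
      have x'fc: "x' \<in> free_countable" unfolding x'_def
        using fc_diff x NS(1) y(1) fc_delta by blast
      have x'0: "\<forall>j\<ge>n. x' j = 0"
      proof (intro allI impI)
        fix j assume "n \<le> j"
        then consider "j = n" | "j > n" by linarith
        then show "x' j = 0"
        proof cases
          case 1 then show ?thesis using jk y by (simp add: x'_def delta_def)
        next
          case 2 then show ?thesis using xs y by (simp add: x'_def delta_def)
        qed
      qed
      obtain a c where ac: "a \<in> N" "c \<in> C" "x' = a + c"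
        using Suc.IH x'fc x'0 unfolding sum_sets_def by blast
      have "a + y \<in> N" using NS(3) ac(1) y(1) by blast
      moreover have "c + delta n k \<in> C"
        using ac(2) fc_add fc_delta jk(2) K0 Kadd unfolding C_def delta_def by auto
      moreover have "x = (a + y) + (c + delta n k)"
        using ac(3) unfolding x'_def by (simp add: algebra_simps)
      ultimately show "x \<in> sum_sets N C" unfolding sum_sets_def by blast
    qed
  qed
  have "sum_sets N C = free_countable"
  proof
    show "sum_sets N C \<subseteq> free_countable"
      using rsub_subset[OF sum_submod[OF N Csub]] .
    show "free_countable \<subseteq> sum_sets N C"
    proof
      fix x :: "nat \<Rightarrow> 'a" assume x: "x \<in> free_countable"
      then obtain n where "\<forall>j>n. x j = 0" by (auto simp: fc_iff)
      then have "\<forall>j\<ge>Suc n. x j = 0" by auto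
      then show "x \<in> sum_sets N C" using cover x by blast
    qed
  qed
  then show ?thesis unfolding direct_summand_def by (intro conjI exI[of _ C] N Csub int)
qed


section \<open>SSP implies semisimple\<close>

definition cg :: "(nat \<Rightarrow> 'a::ring_1) \<Rightarrow> 'a set" where
  "cg a = {y. \<exists>n r. y = (\<Sum>i<n. a i * r i)}"

lemma cg_I: "y = (\<Sum>i<n. a i * r i) \<Longrightarrow> y \<in> cg a"
  unfolding cg_def by blast

lemma sum_ext_zero:
  fixes f :: "nat \<Rightarrow> 'a::comm_monoid_add"
  assumes "\<forall>i\<ge>n. f i = 0" "n \<le> k"
  shows "(\<Sum>i<k. f i) = (\<Sum>i<n. f i)"
  using assms(2)
proof (induction k rule: dec_induct)
  case base then show ?case by simp
next
  case (step k) then show ?case using assms(1) by simp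
qed

lemma cg_extend:
  fixes a r :: "nat \<Rightarrow> 'a::ring_1"
  assumes "n \<le> m"
  shows "(\<Sum>i<n. a i * r i) = (\<Sum>i<m. a i * (if i < n then r i else 0))"
proof -
  have "(\<Sum>i<m. a i * (if i < n then r i else 0)) = (\<Sum>i<n. a i * (if i < n then r i else 0))"
    by (rule sum_ext_zero) (auto simp: assms)
  also have "\<dots> = (\<Sum>i<n. a i * r i)" by (rule sum.cong) auto
  finally show ?thesis by simp
qed

lemma cg_sub: "rsubmodule UNIV (\<lambda>x r. x * r) (cg (a :: nat \<Rightarrow> 'a::ring_1))"
proof -
  have "0 \<in> cg a" unfolding cg_def by (auto intro!: exI[of _ 0])
  moreover have "\<forall>x\<in>cg a. \<forall>y\<in>cg a. x + y \<in> cg a"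
  proof (intro ballI)
    fix x y assume "x \<in> cg a" "y \<in> cg a"
    then obtain n r m s where xy: "x = (\<Sum>i<n. a i * r i)" "y = (\<Sum>i<m. a i * s i)"
      unfolding cg_def by blast
    define k where "k = max n m"
    have nk: "n \<le> k" "m \<le> k" by (simp_all add: k_def)
    have "x = (\<Sum>i<k. a i * (if i < n then r i else 0))" unfolding xy(1) by (rule cg_extend[OF nk(1)])
    moreover have "y = (\<Sum>i<k. a i * (if i < m then s i else 0))" unfolding xy(2) by (rule cg_extend[OF nk(2)])
    ultimately have "x + y = (\<Sum>i<k. a i * ((if i < n then r i else 0) + (if i < m then s i else 0)))"
      by (simp add: sum.distrib distrib_left)
    then show "x + y \<in> cg a" by (rule cg_I)
  qed
  moreover have "\<forall>x\<in>cg a. - x \<in> cg a"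
  proof
    fix x assume "x \<in> cg a"
    then obtain n r where "x = (\<Sum>i<n. a i * r i)" unfolding cg_def by blast
    then have "- x = (\<Sum>i<n. a i * (- r i))" by (simp add: sum_negf)
    then show "- x \<in> cg a" by (rule cg_I)
  qed
  moreover have "\<forall>x\<in>cg a. \<forall>s. x * s \<in> cg a"
  proof (intro ballI allI)
    fix x s assume "x \<in> cg a"
    then obtain n r where "x = (\<Sum>i<n. a i * r i)" unfolding cg_def by blast
    then have "x * s = (\<Sum>i<n. a i * (r i * s))" by (simp add: sum_distrib_right mult.assoc)
    then show "x * s \<in> cg a" by (rule cg_I)
  qed
  ultimately show ?thesis by (rule rsubI[OF subset_UNIV])
qed

lemma cg_in: "a m \<in> cg (a :: nat \<Rightarrow> 'a::ring_1)"
proof -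
  have z: "(\<Sum>i<m. a i * (if i = m then 1 else 0)) = 0" by (rule sum.neutral) auto
  have "a m = (\<Sum>i<Suc m. a i * (if i = m then 1 else 0))"
    unfolding sum.lessThan_Suc z by simp
  then show ?thesis by (rule cg_I)
qed

lemma cg_le:
  assumes "\<forall>i. a i \<in> I" "rsubmodule UNIV (\<lambda>x r. x * r) I"
  shows "cg (a :: nat \<Rightarrow> 'a::ring_1) \<subseteq> I"
proof
  have I: "0 \<in> I" "\<And>x y. x \<in> I \<Longrightarrow> y \<in> I \<Longrightarrow> x + y \<in> I" "\<And>x r. x \<in> I \<Longrightarrow> x * r \<in> I"
    using assms(2) unfolding rsubmodule_def by blast+
  have "(\<Sum>i<n. a i * r i) \<in> I" for n r
    by (induction n) (auto intro: I assms(1)[rule_format])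
  then show "x \<in> I" if "x \<in> cg a" for x using that unfolding cg_def by blast
qed

lemma Tsum:
  fixes x a :: "nat \<Rightarrow> 'a::ring_1"
  assumes "\<forall>j>n. x j = 0" "\<forall>j>m. x j = 0"
  shows "(\<Sum>i<n. a i * x (Suc i)) = (\<Sum>i<m. a i * x (Suc i))"
proof -
  have "(\<Sum>i<max n m. a i * x (Suc i)) = (\<Sum>i<n. a i * x (Suc i))"
    by (rule sum_ext_zero) (use assms(1) in auto)
  moreover have "(\<Sum>i<max n m. a i * x (Suc i)) = (\<Sum>i<m. a i * x (Suc i))"
    by (rule sum_ext_zero) (use assms(2) in auto)
  ultimately show ?thesis by simp
qed

lemma cg_summand:
  assumes ssp: "SSP (free_countable :: (nat \<Rightarrow> 'a::ring_1) set) rsmult"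
  shows "direct_summand UNIV (\<lambda>x r. x * r) (cg (a :: nat \<Rightarrow> 'a))"
proof -
  define A :: "(nat \<Rightarrow> 'a) set" where "A = {x \<in> free_countable. x 0 = 0}"
  define B :: "(nat \<Rightarrow> 'a) set" where "B = {x. \<forall>j>0. x j = 0}"
  define T :: "(nat \<Rightarrow> 'a) set" where
    "T = {x \<in> free_countable. \<exists>n. (\<forall>j>n. x j = 0) \<and> x 0 = (\<Sum>i<n. a i * x (Suc i))}"
  have Tall: "x 0 = (\<Sum>i<m. a i * x (Suc i))" if xT: "x \<in> T" and xm: "\<forall>j>m. x j = 0" for x m
  proof -
    obtain n where "\<forall>j>n. x j = 0" "x 0 = (\<Sum>i<n. a i * x (Suc i))" using xT unfolding T_def by blast
    then show ?thesis using Tsum[of n x m a] xm by simp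
  qed
  have Bfc: "B \<subseteq> free_countable"
  proof
    fix x assume "x \<in> B"
    then have "\<forall>j>0. x j = 0" unfolding B_def by simp
    then show "x \<in> free_countable" unfolding fc_iff by (rule exI[of _ 0])
  qed
  have Bsub: "rsubmodule free_countable rsmult B"
    using Bfc unfolding rsubmodule_def B_def by (auto simp: rsmult_def)
  have Asub: "rsubmodule free_countable rsmult A"
    unfolding rsubmodule_def A_def using fc_zero fc_add fc_uminus fc_rsmult by (auto simp: rsmult_def)
  have Tsub: "rsubmodule free_countable rsmult T"
  proof -
    have "T \<subseteq> free_countable" unfolding T_def by blast
    moreover have "0 \<in> T" unfolding T_def using fc_zero by auto
    moreover have "\<forall>x\<in>T. \<forall>y\<in>T. x + y \<in> T"
    proof (intro ballI)
      fix x y assume xy: "x \<in> T" "y \<in> T"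
      then obtain n m where nm: "\<forall>j>n. x j = 0" "\<forall>j>m. y j = 0" unfolding T_def by blast
      define k where "k = max n m"
      have k: "\<forall>j>k. x j = 0" "\<forall>j>k. y j = 0" using nm k_def by auto
      have "(x + y) 0 = (\<Sum>i<k. a i * (x + y) (Suc i))"
        using Tall[OF xy(1) k(1)] Tall[OF xy(2) k(2)] by (simp add: sum.distrib distrib_left)
      moreover have "\<forall>j>k. (x + y) j = 0" using k by simp
      ultimately show "x + y \<in> T" using xy fc_add unfolding T_def by blast
    qed
    moreover have "\<forall>x\<in>T. - x \<in> T"
    proof
      fix x assume x: "x \<in> T"
      then obtain n where n: "\<forall>j>n. x j = 0" unfolding T_def by blast
      have "(- x) 0 = (\<Sum>i<n. a i * (- x) (Suc i))" using Tall[OF x n] by (simp add: sum_negf)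
      moreover have "\<forall>j>n. (- x) j = 0" using n by simp
      ultimately show "- x \<in> T" using x fc_uminus unfolding T_def by blast
    qed
    moreover have "\<forall>x\<in>T. \<forall>r. rsmult x r \<in> T"
    proof (intro ballI allI)
      fix x r assume x: "x \<in> T"
      then obtain n where n: "\<forall>j>n. x j = 0" unfolding T_def by blast
      have "(rsmult x r) 0 = (\<Sum>i<n. a i * (rsmult x r) (Suc i))" using Tall[OF x n]
        by (simp add: rsmult_def sum_distrib_right mult.assoc)
      moreover have "\<forall>j>n. (rsmult x r) j = 0" using n by (simp add: rsmult_def)
      ultimately show "rsmult x r \<in> T" using x fc_rsmult unfolding T_def by blast
    qed
    ultimately show ?thesis by (rule rsubI)
  qed
  have AB: "A \<inter> B = {0}"
  proof
    show "A \<inter> B \<subseteq> {0}"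
    proof
      fix x assume "x \<in> A \<inter> B"
      then have "\<forall>j. x j = 0" unfolding A_def B_def by (metis (mono_tags) IntD1 IntD2 gr0I mem_Collect_eq)
      then show "x \<in> {0}" by auto
    qed
    show "{0} \<subseteq> A \<inter> B" using rsub_zero[OF Asub] rsub_zero[OF Bsub] by blast
  qed
  have TB: "T \<inter> B = {0}"
  proof
    show "T \<inter> B \<subseteq> {0}"
    proof
      fix x assume x: "x \<in> T \<inter> B"
      then have xj: "\<forall>j>0. x j = 0" unfolding B_def by blast
      have "x 0 = (\<Sum>i<0. a i * x (Suc i))" using Tall x xj by blast
      then have "\<forall>j. x j = 0" using xj by (metis gr0I lessThan_0 sum.empty)
      then show "x \<in> {0}" by auto
    qed
    show "{0} \<subseteq> T \<inter> B" using rsub_zero[OF Tsub] rsub_zero[OF Bsub] by blast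
  qed
  have ABsum: "sum_sets A B = free_countable"
  proof
    show "sum_sets A B \<subseteq> free_countable"
      by (rule rsub_subset[OF sum_submod[OF Asub Bsub]])
    show "free_countable \<subseteq> sum_sets A B"
    proof
      fix x :: "nat \<Rightarrow> 'a" assume x: "x \<in> free_countable"
      have "x = (x - delta 0 (x 0)) + delta 0 (x 0)" by simp
      moreover have "x - delta 0 (x 0) \<in> A" unfolding A_def using x fc_diff fc_delta by (auto simp: delta_def)
      moreover have "delta 0 (x 0) \<in> B" unfolding B_def delta_def by auto
      ultimately show "x \<in> sum_sets A B" unfolding sum_sets_def by blast
    qed
  qed
  have TBsum: "sum_sets T B = free_countable"
  proof
    show "sum_sets T B \<subseteq> free_countable"
      by (rule rsub_subset[OF sum_submod[OF Tsub Bsub]])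
    show "free_countable \<subseteq> sum_sets T B"
    proof
      fix x :: "nat \<Rightarrow> 'a" assume x: "x \<in> free_countable"
      then obtain n where n: "\<forall>j>n. x j = 0" by (auto simp: fc_iff)
      define t where "t = x(0 := (\<Sum>i<n. a i * x (Suc i)))"
      have "t \<in> T" unfolding T_def
      proof (intro CollectI conjI exI[of _ n])
        show "t \<in> free_countable" unfolding fc_iff t_def using n by auto
        show "\<forall>j>n. t j = 0" unfolding t_def using n by auto
        show "t 0 = (\<Sum>i<n. a i * t (Suc i))" unfolding t_def by simp
      qed
      moreover have "x = t + delta 0 (x 0 - t 0)" by (rule ext) (simp add: t_def delta_def)
      moreover have "delta 0 (x 0 - t 0) \<in> B" unfolding B_def delta_def by auto
      ultimately show "x \<in> sum_sets T B" unfolding sum_sets_def by blast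
    qed
  qed
  have dA: "direct_summand free_countable rsmult A"
    unfolding direct_summand_def by (intro conjI exI[of _ B] Asub Bsub AB ABsum)
  have dT: "direct_summand free_countable rsmult T"
    unfolding direct_summand_def by (intro conjI exI[of _ B] Tsub Bsub TB TBsum)
  have dAT: "direct_summand free_countable rsmult (sum_sets A T)"
    using ssp[unfolded SSP_def, rule_format, OF conjI[OF dA dT]] .
  have dd: "rsubmodule free_countable rsmult (sum_sets A T) \<and> (\<exists>D. rsubmodule free_countable rsmult D \<and>
     sum_sets A T \<inter> D = {0} \<and> sum_sets (sum_sets A T) D = free_countable)"
    using dAT unfolding direct_summand_def .
  have ATsub: "rsubmodule free_countable rsmult (sum_sets A T)" using dd by (rule conjunct1)
  obtain D where Dall: "rsubmodule free_countable rsmult D \<and>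
     sum_sets A T \<inter> D = {0} \<and> sum_sets (sum_sets A T) D = free_countable"
    using dd[THEN conjunct2] by (rule exE)
  have Dsub: "rsubmodule free_countable rsmult D" using Dall by (rule conjunct1)
  have ATD: "sum_sets A T \<inter> D = {0}" using Dall[THEN conjunct2] by (rule conjunct1)
  have ATDsum: "sum_sets (sum_sets A T) D = free_countable" using Dall[THEN conjunct2] by (rule conjunct2)
  have P1: "u 0 \<in> cg a" if uAT: "u \<in> sum_sets A T" for u
  proof -
    obtain x t where xt: "x \<in> A" "t \<in> T" "u = x + t" using uAT unfolding sum_sets_def by blast
    have "t \<in> free_countable \<and> (\<exists>n. (\<forall>j>n. t j = 0) \<and> t 0 = (\<Sum>i<n. a i * t (Suc i)))"
      using xt(2) unfolding T_def by (rule CollectD)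
    then obtain n where n: "t 0 = (\<Sum>i<n. a i * t (Suc i))" by blast
    have x0: "x 0 = 0" using xt(1) unfolding A_def by simp
    have "u 0 = x 0 + t 0" using xt(3) by simp
    also have "\<dots> = (\<Sum>i<n. a i * (\<lambda>i. t (Suc i)) i)" using x0 n by simp
    finally show ?thesis by (rule cg_I)
  qed
  have P2: "delta 0 j \<in> sum_sets A T" if jcg: "j \<in> cg a" for j
  proof -
    obtain n r where j: "j = (\<Sum>i<n. a i * r i)" using jcg unfolding cg_def by blast
    define t where "t = (\<lambda>k. if k = 0 then j else if k \<le> n then r (k - 1) else 0)"
    have "t \<in> T" unfolding T_def
    proof (intro CollectI conjI exI[of _ n])
      show "\<forall>k>n. t k = 0" unfolding t_def by auto
      then show "t \<in> free_countable" unfolding fc_iff by blast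
      have t0: "t 0 = j" by (simp add: t_def)
      have "(\<Sum>i<n. a i * t (Suc i)) = (\<Sum>i<n. a i * r i)"
        by (rule sum.cong) (auto simp: t_def)
      then show "t 0 = (\<Sum>i<n. a i * t (Suc i))" using t0 j by simp
    qed
    moreover have "delta 0 j - t \<in> A"
    proof -
      have "t \<in> free_countable" using \<open>t \<in> T\<close> unfolding T_def by blast
      then have "delta 0 j - t \<in> free_countable" by (rule fc_diff[OF fc_delta])
      moreover have "(delta 0 j - t) 0 = 0" by (simp add: delta_def t_def)
      ultimately show ?thesis unfolding A_def by blast
    qed
    moreover have "delta 0 j = (delta 0 j - t) + t" by simp
    ultimately show ?thesis unfolding sum_sets_def by blast
  qed
  have P3: "x \<in> sum_sets A T" if "x \<in> free_countable" "x 0 = 0" for x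
  proof -
    have "x \<in> A" using that unfolding A_def by blast
    moreover have "0 \<in> T" using rsub_zero[OF Tsub] .
    moreover have "x = x + 0" by simp
    ultimately show ?thesis unfolding sum_sets_def by blast
  qed
  have ATadd: "\<And>x y. x \<in> sum_sets A T \<Longrightarrow> y \<in> sum_sets A T \<Longrightarrow> x + y \<in> sum_sets A T"
    using rsub_add[OF ATsub] by blast
  define K where "K = {d 0 | d. d \<in> D}"
  have DS: "D \<subseteq> free_countable" "0 \<in> D" "\<And>x y. x \<in> D \<Longrightarrow> y \<in> D \<Longrightarrow> x + y \<in> D"
    "\<And>x. x \<in> D \<Longrightarrow> - x \<in> D" "\<And>x r. x \<in> D \<Longrightarrow> rsmult x r \<in> D"
    using Dsub unfolding rsubmodule_def by blast+
  have Ksub: "rsubmodule UNIV (\<lambda>x r. x * r) K"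
  proof -
    have "(0::'a) \<in> K" unfolding K_def using DS(2) by (auto intro!: exI[of _ "0::nat\<Rightarrow>'a"])
    moreover have "\<forall>x\<in>K. \<forall>y\<in>K. x + y \<in> K"
    proof (intro ballI)
      fix x y assume "x \<in> K" "y \<in> K"
      then obtain u v where "u \<in> D" "x = u 0" "v \<in> D" "y = v 0" unfolding K_def by blast
      then show "x + y \<in> K" unfolding K_def by (intro CollectI exI[of _ "u+v"]) (auto intro: DS(3))
    qed
    moreover have "\<forall>x\<in>K. - x \<in> K"
    proof
      fix x assume "x \<in> K"
      then obtain u where "u \<in> D" "x = u 0" unfolding K_def by blast
      then show "- x \<in> K" unfolding K_def by (intro CollectI exI[of _ "-u"]) (auto intro: DS(4))
    qed
    moreover have "\<forall>x\<in>K. \<forall>r. x * r \<in> K"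
    proof (intro ballI allI)
      fix x r assume "x \<in> K"
      then obtain u where "u \<in> D" "x = u 0" unfolding K_def by blast
      then show "x * r \<in> K" unfolding K_def
        by (intro CollectI exI[of _ "rsmult u r"]) (use DS(5)[of u r] in \<open>auto simp: rsmult_def\<close>)
    qed
    ultimately show ?thesis by (rule rsubI[OF subset_UNIV])
  qed
  have JK: "cg a \<inter> K = {0}"
  proof
    show "cg a \<inter> K \<subseteq> {0}"
    proof
      fix jj assume jj: "jj \<in> cg a \<inter> K"
      then obtain d where d: "d \<in> D" "jj = d 0" unfolding K_def by blast
      have "delta 0 jj \<in> sum_sets A T" using P2 jj by blast
      moreover have "d - delta 0 jj \<in> sum_sets A T"
      proof (rule P3)
        show "d - delta 0 jj \<in> free_countable" using fc_diff fc_delta d DS(1) by blast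
        show "(d - delta 0 jj) 0 = 0" using d by (simp add: delta_def)
      qed
      ultimately have "delta 0 jj + (d - delta 0 jj) \<in> sum_sets A T" using ATadd by blast
      then have "d \<in> sum_sets A T" by simp
      then have "d = 0" using ATD d by blast
      then show "jj \<in> {0}" using d by simp
    qed
    show "{0} \<subseteq> cg a \<inter> K" using rsub_zero[OF cg_sub] rsub_zero[OF Ksub] by blast
  qed
  have JKsum: "sum_sets (cg a) K = UNIV"
  proof -
    have "y \<in> sum_sets (cg a) K" for y
    proof -
      have "delta 0 y \<in> sum_sets (sum_sets A T) D" using ATDsum fc_delta by blast
      then obtain u d where ud: "u \<in> sum_sets A T" "d \<in> D" "delta 0 y = u + d"
        unfolding sum_sets_def by blast
      then have "delta 0 y 0 = (u + d) 0" by simp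
      then have "y = u 0 + d 0" by (simp add: delta_def)
      moreover have "u 0 \<in> cg a" using P1 ud by blast
      moreover have "d 0 \<in> K" using ud unfolding K_def by blast
      ultimately show ?thesis unfolding sum_sets_def by blast
    qed
    then show ?thesis by blast
  qed
  show ?thesis unfolding direct_summand_def by (intro conjI exI[of _ K] cg_sub Ksub JK JKsum)
qed

lemma ssp_semisimple:
  assumes ssp: "SSP (free_countable :: (nat \<Rightarrow> 'a::ring_1) set) rsmult"
  shows "semisimple_ring TYPE('a)"
  unfolding semisimple_ring_def
proof (intro allI impI)
  fix I :: "'a set" assume I: "rsubmodule UNIV (\<lambda>x r. x * r) I"
  show "direct_summand UNIV (\<lambda>x r. x * r) I"
  proof (cases "\<exists>a. (\<forall>i. a i \<in> I) \<and> cg a = I")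
    case True
    then obtain a where "cg a = I" by blast
    then show ?thesis using cg_summand[OF ssp, of a] by simp
  next
    case False
    have ex: "\<exists>b. b \<in> I \<and> b \<notin> cg p" if "\<forall>i. p i \<in> I" for p
    proof -
      have "cg p \<subseteq> I" using cg_le[OF that I] .
      moreover have "cg p \<noteq> I" using False that by blast
      ultimately show ?thesis by blast
    qed
    define P :: "nat \<Rightarrow> nat \<Rightarrow> 'a" where
      "P = rec_nat (\<lambda>_. 0) (\<lambda>n p. p(n := SOME b. b \<in> I \<and> b \<notin> cg p))"
    have P0: "P 0 = (\<lambda>_. 0)" unfolding P_def by simp
    have PS: "P (Suc n) = (P n)(n := SOME b. b \<in> I \<and> b \<notin> cg (P n))" for n
      unfolding P_def by simp
    have I0: "0 \<in> I" using rsub_zero[OF I] .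
    have PI: "\<forall>i. P n i \<in> I" for n
    proof (induction n)
      case 0 then show ?case using P0 I0 by simp
    next
      case (Suc n)
      have "(SOME b. b \<in> I \<and> b \<notin> cg (P n)) \<in> I"
        using someI_ex[OF ex[OF Suc.IH]] by blast
      then show ?case using Suc.IH PS[of n] by simp
    qed
    have Pnew: "P (Suc n) n \<notin> cg (P n)" for n
      using someI_ex[OF ex[OF PI[of n]]] PS[of n] by simp
    define a where "a i = P (Suc i) i" for i
    have Pa: "i < m \<Longrightarrow> P m i = a i" for i m
    proof (induction m)
      case 0 then show ?case by simp
    next
      case (Suc m)
      show ?case
      proof (cases "i = m")
        case True then show ?thesis unfolding a_def by simp
      next
        case False then show ?thesis using Suc PS[of m] by simp
      qed
    qed
    have "direct_summand UNIV (\<lambda>x r. x * r) (cg a)" by (rule cg_summand[OF ssp])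
    then have "\<exists>K. rsubmodule UNIV (\<lambda>x r. x * r) K \<and> cg a \<inter> K = {0} \<and> sum_sets (cg a) K = UNIV"
      unfolding direct_summand_def by (rule conjunct2)
    then obtain K where K0: "rsubmodule UNIV (\<lambda>x r. x * r) K \<and> cg a \<inter> K = {0} \<and> sum_sets (cg a) K = UNIV"
      by (rule exE)
    have K: "rsubmodule UNIV (\<lambda>x r. x * r) K" "cg a \<inter> K = {0}" "sum_sets (cg a) K = UNIV"
      using K0 by simp_all
    have "(1::'a) \<in> sum_sets (cg a) K" using K(3) by blast
    then obtain e k where ek: "e \<in> cg a" "k \<in> K" "1 = e + k" unfolding sum_sets_def by blast
    then obtain n r where er: "e = (\<Sum>i<n. a i * r i)" unfolding cg_def by blast
    have Jc: "\<And>x y. x \<in> cg a \<Longrightarrow> y \<in> cg a \<Longrightarrow> x + y \<in> cg a"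
      "\<And>x. x \<in> cg a \<Longrightarrow> - x \<in> cg a" "\<And>x r. x \<in> cg a \<Longrightarrow> x * r \<in> cg a"
      using cg_sub[of a] unfolding rsubmodule_def by blast+
    have an: "a n \<in> cg a" by (rule cg_in)
    have kK: "k * a n \<in> K" using rsub_act[OF K(1) ek(2)] .
    have ke: "k = 1 - e" using ek(3) by (metis add_diff_cancel_left')
    have kan: "k * a n = a n + - (e * a n)" unfolding ke by (simp add: left_diff_distrib)
    have kin: "k * a n \<in> cg a" unfolding kan by (rule Jc(1)[OF an Jc(2)[OF Jc(3)[OF ek(1)]]])
    have "k * a n = 0" using K(2) kin kK by blast
    then have "a n - e * a n = 0" using kan by simp
    then have "a n = e * a n" by simp
    also have "\<dots> = (\<Sum>i<n. P n i * (r i * a n))"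
      unfolding er by (simp add: sum_distrib_right mult.assoc Pa)
    finally have "a n \<in> cg (P n)" by (rule cg_I)
    then show ?thesis using Pnew[of n] unfolding a_def by simp
  qed
qed

theorem corollary2p18:
  shows "semisimple_ring TYPE('a::ring_1) \<longleftrightarrow> SSP (free_countable :: (nat \<Rightarrow> 'a) set) rsmult"
proof
  assume ss: "semisimple_ring TYPE('a::ring_1)"
  show "SSP (free_countable :: (nat \<Rightarrow> 'a) set) rsmult"
    unfolding SSP_def
  proof (intro allI impI)
    fix S T :: "(nat \<Rightarrow> 'a) set"
    assume "direct_summand free_countable rsmult S \<and> direct_summand free_countable rsmult T"
    then have "rsubmodule free_countable rsmult S" "rsubmodule free_countable rsmult T"
      unfolding direct_summand_def by simp_all
    then show "direct_summand free_countable rsmult (sum_sets S T)"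
      by (intro submod_summand[OF ss] sum_submod)
  qed
next
  assume "SSP (free_countable :: (nat \<Rightarrow> 'a) set) rsmult"
  then show "semisimple_ring TYPE('a::ring_1)" by (rule ssp_semisimple)
qed

end
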